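(* Assume the standing setup below with $m\ge 3$. Then every downset $S$ of $Q$ with $|S|=n$ such that $S\not\supseteq A\setminus X$ and $S\not\supseteq C\setminus X$ is isomorphic to $B$.
   Context: Standing setup: $\Gamma_n=\{A,B,C\}$ is a set of three pairwise non-isomorphic posets of size $n$, and $Q$ is a witness of $\Gamma_n$ (every downset of $Q$ of size $n$ is isomorphic to one of $A,B,C$, and each occurs). $G_n(Q)$ is the exchange graph: vertices are all downsets of $Q$ of size $n$ (as subsets), adjacent when they differ by exactly one element. A special path is a path $v_0,\ldots,v_r$ ($r\ge2$) in $G_n(Q)$ whose first vertex, internal vertices, and last vertex are isomorphic to three distinct members of $\Gamma_n$ respectively (all internal vertices isomorphic to the same member). Fix a special path of minimal length among all special paths in $G_n(Q)$, labelled so that $v_0\cong A$, $v_1,\ldots,v_{r-1}\cong B$, $v_r\cong C$; by abuse of notation $A:=v_0$ and $C:=v_r$ denote these specific downsets (anchor copies). Assume $Q$ equals the union of the vertices of this path (when $r\ge 3$ this union is $A\cup C$). Let $X=A\cap C$ and $m=|A\setminus X|=|C\setminus X|$. *)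

theory Defs
  imports Main
begin

type_synonym 'a pos = "'a set \<times> ('a \<Rightarrow> 'a \<Rightarrow> bool)"

definition is_poset :: "'a pos \<Rightarrow> bool" where
  "is_poset P \<longleftrightarrow>
     (\<forall>x\<in>fst P. snd P x x) \<and>
     (\<forall>x\<in>fst P. \<forall>y\<in>fst P. snd P x y \<and> snd P y x \<longrightarrow> x = y) \<and>
     (\<forall>x\<in>fst P. \<forall>y\<in>fst P. \<forall>z\<in>fst P. snd P x y \<and> snd P y z \<longrightarrow> snd P x z)"

definition pos_iso :: "'a pos \<Rightarrow> 'b pos \<Rightarrow> bool" where
  "pos_iso P P' \<longleftrightarrow>
     (\<exists>f. bij_betw f (fst P) (fst P') \<and>
          (\<forall>x\<in>fst P. \<forall>y\<in>fst P. snd P x y \<longleftrightarrow> snd P' (f x) (f y)))"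

definition subpos :: "'a pos \<Rightarrow> 'a set \<Rightarrow> 'a pos" where
  "subpos Q S = (S, snd Q)"

definition downset :: "'a pos \<Rightarrow> 'a set \<Rightarrow> bool" where
  "downset Q S \<longleftrightarrow> S \<subseteq> fst Q \<and> (\<forall>x\<in>S. \<forall>y\<in>fst Q. snd Q y x \<longrightarrow> y \<in> S)"

definition exch_vertices :: "'a pos \<Rightarrow> nat \<Rightarrow> 'a set set" where
  "exch_vertices Q n = {S. downset Q S \<and> card S = n}"

definition exch_adj :: "'a set \<Rightarrow> 'a set \<Rightarrow> bool" where
  "exch_adj S T \<longleftrightarrow> card (S - T) = 1 \<and> card (T - S) = 1"

definition exch_path :: "'a pos \<Rightarrow> nat \<Rightarrow> 'a set list \<Rightarrow> bool" where
  "exch_path Q n vs \<longleftrightarrow> vs \<noteq> [] \<and> set vs \<subseteq> exch_vertices Q n \<and> distinct vs \<and>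
     (\<forall>i. Suc i < length vs \<longrightarrow> exch_adj (vs ! i) (vs ! Suc i))"

definition witness :: "'a pos \<Rightarrow> nat \<Rightarrow> 'b pos set \<Rightarrow> bool" where
  "witness Q n Gam \<longleftrightarrow>
     (\<forall>S\<in>exch_vertices Q n. \<exists>P\<in>Gam. pos_iso (subpos Q S) P) \<and>
     (\<forall>P\<in>Gam. \<exists>S\<in>exch_vertices Q n. pos_iso (subpos Q S) P)"

text \<open>Special path (r >= 2, i.e. at least 3 vertices): first, internal, last vertices isomorphic
  to three distinct members of Gamma, all internal vertices to the same member.\<close>
definition special_path :: "'a pos \<Rightarrow> nat \<Rightarrow> 'b pos set \<Rightarrow> 'a set list \<Rightarrow> bool" where
  "special_path Q n Gam vs \<longleftrightarrow> exch_path Q n vs \<and> length vs \<ge> 3 \<and>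
     (\<exists>P1\<in>Gam. \<exists>P2\<in>Gam. \<exists>P3\<in>Gam. P1 \<noteq> P2 \<and> P2 \<noteq> P3 \<and> P1 \<noteq> P3 \<and>
        pos_iso (subpos Q (hd vs)) P1 \<and>
        (\<forall>i. 0 < i \<and> i < length vs - 1 \<longrightarrow> pos_iso (subpos Q (vs ! i)) P2) \<and>
        pos_iso (subpos Q (last vs)) P3)"

end

theory Submission
  imports Defs
begin

lemma pos_iso_refl: "pos_iso P P"
  unfolding pos_iso_def by (rule exI[of _ id]) auto

lemma pos_iso_sym:
  assumes "pos_iso P P'" shows "pos_iso P' P"
proof -
  obtain f where f: "bij_betw f (fst P) (fst P')"
    and h: "\<forall>x\<in>fst P. \<forall>y\<in>fst P. snd P x y \<longleftrightarrow> snd P' (f x) (f y)"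
    using assms unfolding pos_iso_def by blast
  let ?g = "inv_into (fst P) f"
  have g: "bij_betw ?g (fst P') (fst P)" using f by (rule bij_betw_inv_into)
  have "\<forall>x\<in>fst P'. \<forall>y\<in>fst P'. snd P' x y \<longleftrightarrow> snd P (?g x) (?g y)"
  proof (intro ballI)
    fix x y assume x: "x \<in> fst P'" and y: "y \<in> fst P'"
    have "?g x \<in> fst P" "?g y \<in> fst P" using g x y bij_betwE by blast+
    moreover have "f (?g x) = x" "f (?g y) = y" using f x y by (simp_all add: bij_betw_inv_into_right)
    ultimately show "snd P' x y \<longleftrightarrow> snd P (?g x) (?g y)" using h by metis
  qed
  with g show ?thesis unfolding pos_iso_def by blast
qed

lemma pos_iso_trans:
  assumes "pos_iso P1 P2" "pos_iso P2 P3" shows "pos_iso P1 P3"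
proof -
  obtain f where f: "bij_betw f (fst P1) (fst P2)"
    and hf: "\<forall>x\<in>fst P1. \<forall>y\<in>fst P1. snd P1 x y \<longleftrightarrow> snd P2 (f x) (f y)"
    using assms(1) unfolding pos_iso_def by blast
  obtain g where g: "bij_betw g (fst P2) (fst P3)"
    and hg: "\<forall>x\<in>fst P2. \<forall>y\<in>fst P2. snd P2 x y \<longleftrightarrow> snd P3 (g x) (g y)"
    using assms(2) unfolding pos_iso_def by blast
  have "bij_betw (g \<circ> f) (fst P1) (fst P3)" using f g by (rule bij_betw_trans)
  moreover have "\<forall>x\<in>fst P1. \<forall>y\<in>fst P1. snd P1 x y \<longleftrightarrow> snd P3 ((g \<circ> f) x) ((g \<circ> f) y)"
  proof (intro ballI)
    fix x y assume x: "x \<in> fst P1" and y: "y \<in> fst P1"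
    have "f x \<in> fst P2" "f y \<in> fst P2" using f x y bij_betwE by blast+
    then show "snd P1 x y \<longleftrightarrow> snd P3 ((g \<circ> f) x) ((g \<circ> f) y)"
      using hf hg x y by simp
  qed
  ultimately show ?thesis unfolding pos_iso_def by blast
qed

lemma ex_min_rel:
  assumes "finite F" "F \<noteq> {}"
    and tr: "\<forall>x\<in>F. \<forall>y\<in>F. \<forall>z\<in>F. R x y \<and> R y z \<longrightarrow> R x z"
    and an: "\<forall>x\<in>F. \<forall>y\<in>F. R x y \<and> R y x \<longrightarrow> x = y"
  shows "\<exists>t\<in>F. \<forall>z\<in>F. R z t \<longrightarrow> z = t"
  using assms
proof (induction F rule: finite_ne_induct)
  case (singleton x) then show ?case by blast
next
  case (insert x F)
  have tr': "\<forall>x\<in>F. \<forall>y\<in>F. \<forall>z\<in>F. R x y \<and> R y z \<longrightarrow> R x z" using insert.prems(1) by blast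
  have an': "\<forall>x\<in>F. \<forall>y\<in>F. R x y \<and> R y x \<longrightarrow> x = y" using insert.prems(2) by blast
  obtain t where t: "t \<in> F" "\<forall>z\<in>F. R z t \<longrightarrow> z = t" using insert.IH[OF tr' an'] by blast
  show ?case
  proof (cases "R x t")
    case True
    have "\<forall>z\<in>insert x F. R z x \<longrightarrow> z = x"
    proof (intro ballI impI)
      fix z assume z: "z \<in> insert x F" "R z x"
      show "z = x"
      proof (cases "z = x")
        case False
        then have zF: "z \<in> F" using z by blast
        have "R z t" using insert.prems(1) z(2) True t(1) zF by blast
        then have "z = t" using t zF by blast
        then show ?thesis using insert.prems(2) z(2) True t(1) by blast
      qed
    qed
    then show ?thesis by blast
  next
    case False
    have "\<forall>z\<in>insert x F. R z t \<longrightarrow> z = t"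
    proof (intro ballI impI)
      fix z assume z: "z \<in> insert x F" "R z t"
      then have "z \<noteq> x" using False by blast
      then show "z = t" using z t by blast
    qed
    then show ?thesis using t(1) by blast
  qed
qed

locale base =
  fixes Q :: "'a pos" and n :: nat
  assumes posQ: "is_poset Q" and finQ: "finite (fst Q)"
begin

abbreviation "V \<equiv> exch_vertices Q n"

lemma le_refl: "x \<in> fst Q \<Longrightarrow> snd Q x x"
  using posQ unfolding is_poset_def by blast
lemma le_antisym: "x \<in> fst Q \<Longrightarrow> y \<in> fst Q \<Longrightarrow> snd Q x y \<Longrightarrow> snd Q y x \<Longrightarrow> x = y"
  using posQ unfolding is_poset_def by blast
lemma le_trans: "x \<in> fst Q \<Longrightarrow> y \<in> fst Q \<Longrightarrow> z \<in> fst Q \<Longrightarrow> snd Q x y \<Longrightarrow> snd Q y z \<Longrightarrow> snd Q x z"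
  using posQ unfolding is_poset_def by blast

lemma ex_min:
  assumes "finite F" "F \<noteq> {}" "F \<subseteq> fst Q"
  shows "\<exists>t\<in>F. \<forall>z\<in>F. snd Q z t \<longrightarrow> z = t"
proof (rule ex_min_rel[OF assms(1,2)])
  show "\<forall>x\<in>F. \<forall>y\<in>F. \<forall>z\<in>F. snd Q x y \<and> snd Q y z \<longrightarrow> snd Q x z"
  proof (intro ballI impI)
    fix x y z assume "x \<in> F" "y \<in> F" "z \<in> F" "snd Q x y \<and> snd Q y z"
    then show "snd Q x z" using assms(3) le_trans[of x y z] by blast
  qed
  show "\<forall>x\<in>F. \<forall>y\<in>F. snd Q x y \<and> snd Q y x \<longrightarrow> x = y"
  proof (intro ballI impI)
    fix x y assume "x \<in> F" "y \<in> F" "snd Q x y \<and> snd Q y x"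
    then show "x = y" using assms(3) le_antisym[of x y] by blast
  qed
qed

lemma ex_max:
  assumes "finite F" "F \<noteq> {}" "F \<subseteq> fst Q"
  shows "\<exists>t\<in>F. \<forall>z\<in>F. snd Q t z \<longrightarrow> z = t"
proof (rule ex_min_rel[OF assms(1,2), where R="\<lambda>x y. snd Q y x"])
  show "\<forall>x\<in>F. \<forall>y\<in>F. \<forall>z\<in>F. snd Q y x \<and> snd Q z y \<longrightarrow> snd Q z x"
  proof (intro ballI impI)
    fix x y z assume "x \<in> F" "y \<in> F" "z \<in> F" "snd Q y x \<and> snd Q z y"
    then show "snd Q z x" using assms(3) le_trans[of z y x] by blast
  qed
  show "\<forall>x\<in>F. \<forall>y\<in>F. snd Q y x \<and> snd Q x y \<longrightarrow> x = y"
  proof (intro ballI impI)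
    fix x y assume "x \<in> F" "y \<in> F" "snd Q y x \<and> snd Q x y"
    then show "x = y" using assms(3) le_antisym[of x y] by blast
  qed
qed

lemma VD: assumes "S \<in> V" shows "downset Q S" "card S = n" "S \<subseteq> fst Q" "finite S"
  using assms finQ unfolding exch_vertices_def downset_def by (auto intro: finite_subset)

lemma VI: "downset Q S \<Longrightarrow> card S = n \<Longrightarrow> S \<in> V"
  unfolding exch_vertices_def by auto

lemma downD: "downset Q S \<Longrightarrow> x \<in> S \<Longrightarrow> y \<in> fst Q \<Longrightarrow> snd Q y x \<Longrightarrow> y \<in> S"
  unfolding downset_def by blast

lemma downset_Int: "downset Q S \<Longrightarrow> downset Q T \<Longrightarrow> downset Q (S \<inter> T)"
  unfolding downset_def by blast
lemma downset_Un: "downset Q S \<Longrightarrow> downset Q T \<Longrightarrow> downset Q (S \<union> T)"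
  unfolding downset_def by blast

lemma card_diff_sym: assumes "S \<in> V" "T \<in> V" shows "card (S - T) = card (T - S)"
proof -
  have f: "finite S" "finite T" using VD(4) assms by blast+
  have "card S = card (S \<inter> T) + card (S - T)" using card_Int_Diff[OF f(1)] .
  moreover have "card T = card (T \<inter> S) + card (T - S)" using card_Int_Diff[OF f(2)] .
  moreover have "card S = card T" using VD(2) assms by simp
  ultimately show ?thesis by (simp add: Int_commute)
qed

lemma tri: assumes "finite S" "finite T" shows "card (S - U) \<le> card (S - T) + card (T - U)"
proof -
  have "S - U \<subseteq> (S - T) \<union> (T - U)" by blast
  moreover have "finite ((S - T) \<union> (T - U))" using assms by simp
  ultimately have "card (S - U) \<le> card ((S - T) \<union> (T - U))" by (simp add: card_mono)
  also have "\<dots> \<le> card (S - T) + card (T - U)" by (rule card_Un_le)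
  finally show ?thesis .
qed

definition walk :: "'a set list \<Rightarrow> bool" where
  "walk ws \<longleftrightarrow> ws \<noteq> [] \<and> set ws \<subseteq> V \<and> (\<forall>i. Suc i < length ws \<longrightarrow> exch_adj (ws!i) (ws!Suc i))"

lemma walk_Cons:
  assumes w: "walk ws" and S: "S \<in> V" and a: "exch_adj S (hd ws)"
  shows "walk (S # ws)"
proof -
  have ne: "ws \<noteq> []" and sV: "set ws \<subseteq> V"
    and ad: "\<forall>i. Suc i < length ws \<longrightarrow> exch_adj (ws!i) (ws!Suc i)"
    using w unfolding walk_def by blast+
  have "\<forall>i. Suc i < length (S # ws) \<longrightarrow> exch_adj ((S # ws)!i) ((S # ws)!Suc i)"
  proof (intro allI impI)
    fix i assume i: "Suc i < length (S # ws)"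
    show "exch_adj ((S # ws)!i) ((S # ws)!Suc i)"
    proof (cases i)
      case 0 then show ?thesis using a ne by (simp add: hd_conv_nth)
    next
      case (Suc j) then show ?thesis using ad i by simp
    qed
  qed
  moreover have "set (S # ws) \<subseteq> V" using S sV by simp
  ultimately show ?thesis unfolding walk_def by blast
qed

lemma walk_single: "S \<in> V \<Longrightarrow> walk [S]"
  unfolding walk_def by auto

lemma walk_ConsD: "walk (S # ws) \<Longrightarrow> ws \<noteq> [] \<Longrightarrow> walk ws \<and> exch_adj S (hd ws)"
proof -
  assume w: "walk (S # ws)" and ne: "ws \<noteq> []"
  have "set (S # ws) \<subseteq> V" using w unfolding walk_def by blast
  then have "ws \<noteq> [] \<and> set ws \<subseteq> V" using ne by simp
  moreover have "\<forall>i. Suc i < length ws \<longrightarrow> exch_adj (ws!i) (ws!Suc i)"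
  proof (intro allI impI)
    fix i assume "Suc i < length ws"
    then have "Suc (Suc i) < length (S # ws)" by simp
    then have "exch_adj ((S # ws)!(Suc i)) ((S # ws)!Suc (Suc i))" using w unfolding walk_def by blast
    then show "exch_adj (ws!i) (ws!Suc i)" by simp
  qed
  moreover have "Suc 0 < length (S # ws)" using ne by simp
  then have "exch_adj ((S # ws)!0) ((S # ws)!Suc 0)" using w unfolding walk_def by blast
  then have "exch_adj S (hd ws)" using ne by (simp add: hd_conv_nth)
  ultimately show ?thesis unfolding walk_def by blast
qed

lemma walk_app: "walk xs \<Longrightarrow> walk ys \<Longrightarrow> last xs = hd ys \<Longrightarrow> walk (xs @ tl ys)"
proof (induction xs)
  case Nil then show ?case by (simp add: walk_def)
next
  case (Cons x xs)
  show ?case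
  proof (cases "xs = []")
    case True
    have "ys \<noteq> []" using Cons.prems(2) unfolding walk_def by blast
    then have "(x # xs) @ tl ys = ys" using True Cons.prems(3) by simp
    then show ?thesis using Cons.prems(2) by simp
  next
    case False
    have w: "walk xs" "exch_adj x (hd xs)" using walk_ConsD[OF Cons.prems(1) False] by auto
    have "walk (xs @ tl ys)" using Cons.IH[OF w(1) Cons.prems(2)] Cons.prems(3) False by simp
    moreover have "x \<in> V" using Cons.prems(1) unfolding walk_def by simp
    ultimately show ?thesis using walk_Cons[of "xs @ tl ys" x] w(2) False by simp
  qed
qed

lemma exchange:
  assumes "S \<in> V" "T \<in> V"
  shows "\<exists>ws. walk ws \<and> hd ws = S \<and> last ws = T \<and> length ws = Suc (card (S - T))"
  using assms
proof (induction "card (S - T)" arbitrary: S)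
  case 0
  have "finite (S - T)" using VD(4)[OF 0(2)] by simp
  then have "S - T = {}" using 0(1) by simp
  then have "S \<subseteq> T" by blast
  then have "S = T" using VD[OF 0(2)] VD[OF 0(3)] by (metis card_subset_eq)
  then show ?case using walk_single[OF 0(2)] 0(1) by (intro exI[of _ "[S]"]) simp
next
  case (Suc k)
  have fS: "finite S" and fT: "finite T" using VD(4) Suc.prems by blast+
  have dS: "downset Q S" and dT: "downset Q T" using VD(1) Suc.prems by blast+
  have "S - T \<noteq> {}" using Suc.hyps(2) by (metis card.empty nat.distinct(1))
  moreover have cTS: "card (T - S) = Suc k" using card_diff_sym[OF Suc.prems] Suc.hyps(2) by simp
  then have "T - S \<noteq> {}" by (metis card.empty nat.distinct(1))
  moreover have "S - T \<subseteq> fst Q" "T - S \<subseteq> fst Q"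
    using VD(3)[OF Suc.prems(1)] VD(3)[OF Suc.prems(2)] by blast+
  moreover have "finite (S - T)" "finite (T - S)" using fS fT by simp_all
  ultimately obtain s t where s: "s \<in> S - T" "\<forall>z\<in>S - T. snd Q s z \<longrightarrow> z = s"
      and t: "t \<in> T - S" "\<forall>z\<in>T - S. snd Q z t \<longrightarrow> z = t"
    using ex_min[of "T - S"] ex_max[of "S - T"] by blast
  define S' where "S' = insert t (S - {s})"
  have st: "s \<noteq> t" using s t by auto
  have dS': "downset Q S'"
    unfolding downset_def
  proof (intro conjI ballI impI)
    show "S' \<subseteq> fst Q" using VD(3)[OF Suc.prems(1)] VD(3)[OF Suc.prems(2)] s t unfolding S'_def by blast
    fix x y assume x: "x \<in> S'" and y: "y \<in> fst Q" and yx: "snd Q y x"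
    show "y \<in> S'"
    proof (cases "x = t")
      case True
      then have yT: "y \<in> T" using downD[OF dT] t y yx by auto
      show ?thesis
      proof (cases "y \<in> S")
        case True
        then show ?thesis using yT s unfolding S'_def by auto
      next
        case False
        then show ?thesis using yT t(2) yx \<open>x = t\<close> unfolding S'_def by auto
      qed
    next
      case False
      then have xS: "x \<in> S" "x \<noteq> s" using x unfolding S'_def by auto
      have yS: "y \<in> S" using downD[OF dS xS(1) y yx] .
      show ?thesis
      proof (cases "y = s")
        case True
        have "x \<notin> T"
        proof
          assume "x \<in> T" then have "s \<in> T" using downD[OF dT _ y yx] True by auto
          then show False using s by auto
        qed
        then show ?thesis using s(2) xS yx True by auto
      next
        case False then show ?thesis using yS unfolding S'_def by auto
      qed
    qed
  qed
  have cS': "card S' = n"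
  proof -
    have "t \<notin> S - {s}" using t by auto
    then have "card S' = Suc (card (S - {s}))" unfolding S'_def using fS by simp
    also have "\<dots> = card S" using card_Suc_Diff1[OF fS, of s] s by blast
    finally show ?thesis using VD(2)[OF Suc.prems(1)] by simp
  qed
  have S'V: "S' \<in> V" using VI[OF dS' cS'] .
  have adj: "exch_adj S S'"
  proof -
    have "S - S' = {s}" unfolding S'_def using s st by auto
    moreover have "S' - S = {t}" unfolding S'_def using t by auto
    ultimately show ?thesis unfolding exch_adj_def by simp
  qed
  have "S' - T = (S - T) - {s}" unfolding S'_def using t by auto
  then have "k = card (S' - T)" using Suc.hyps(2) s fS by simp
  from Suc.hyps(1)[OF this S'V Suc.prems(2)] obtain ws where
    ws: "walk ws" "hd ws = S'" "last ws = T" "length ws = Suc (card (S' - T))" by blast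
  have "walk (S # ws)" using walk_Cons[OF ws(1) Suc.prems(1)] adj ws(2) by simp
  moreover have "ws \<noteq> []" using ws(1) unfolding walk_def by auto
  moreover have "last (S # ws) = T" using ws(3) \<open>ws \<noteq> []\<close> by simp
  moreover have "length (S # ws) = Suc (card (S - T))"
    using ws(4) \<open>k = card (S' - T)\<close> Suc.hyps(2) by simp
  ultimately show ?case by (intro exI[of _ "S # ws"]) simp
qed

lemma shrink:
  assumes "downset Q L" "downset Q D0" "L \<subseteq> D0" "card L \<le> k" "k \<le> card D0"
  shows "\<exists>D. downset Q D \<and> L \<subseteq> D \<and> D \<subseteq> D0 \<and> card D = k"
  using assms
proof (induction "card D0 - k" arbitrary: D0)
  case 0
  then show ?case by (intro exI[of _ D0]) auto
next
  case (Suc x)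
  have "D0 \<subseteq> fst Q" using Suc.prems(2) unfolding downset_def by blast
  then have fD0: "finite D0" using finQ by (rule finite_subset)
  have "L \<noteq> D0" using Suc.hyps(2) Suc.prems(4) by (metis diff_is_0_eq nat.distinct(1) order.trans)
  then have ne: "D0 - L \<noteq> {}" using Suc.prems(3) by auto
  obtain s where s: "s \<in> D0 - L" "\<forall>z\<in>D0 - L. snd Q s z \<longrightarrow> z = s"
    using ex_max[of "D0 - L"] ne fD0 Suc.prems(2) unfolding downset_def by blast
  have d1: "downset Q (D0 - {s})"
    unfolding downset_def
  proof (intro conjI ballI impI)
    show "D0 - {s} \<subseteq> fst Q" using Suc.prems(2) unfolding downset_def by auto
    fix x y assume x: "x \<in> D0 - {s}" and y: "y \<in> fst Q" and yx: "snd Q y x"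
    have "y \<in> D0" using downD[OF Suc.prems(2) _ y yx] x by auto
    moreover have "y \<noteq> s"
    proof
      assume ys: "y = s"
      show False
      proof (cases "x \<in> L")
        case True then have "s \<in> L" using downD[OF Suc.prems(1) _ y yx] ys by auto
        then show False using s by auto
      next
        case False then show False using s(2) x yx ys by auto
      qed
    qed
    ultimately show "y \<in> D0 - {s}" by auto
  qed
  have c: "card (D0 - {s}) = card D0 - 1" using s fD0 by simp
  have "x = card (D0 - {s}) - k" using c Suc.hyps(2) by simp
  have l1: "L \<subseteq> D0 - {s}" using Suc.prems(3) s by blast
  have l2: "k \<le> card (D0 - {s})" using c Suc.hyps(2) by simp
  obtain D where D: "downset Q D" "L \<subseteq> D" "D \<subseteq> D0 - {s}" "card D = k"
    using Suc.hyps(1)[OF \<open>x = card (D0 - {s}) - k\<close> Suc.prems(1) d1 l1 Suc.prems(4) l2] by blast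
  then have "D \<subseteq> D0" by blast
  then show ?case using D by (intro exI[of _ D]) simp
qed

end



locale typed = base Q n for Q :: "'a pos" and n :: nat +
  fixes TA TB TC :: "'b pos"
  assumes nAB: "\<not> pos_iso TA TB" and nAC: "\<not> pos_iso TA TC" and nBC: "\<not> pos_iso TB TC"
    and types: "S \<in> exch_vertices Q n \<Longrightarrow>
       pos_iso (subpos Q S) TA \<or> pos_iso (subpos Q S) TB \<or> pos_iso (subpos Q S) TC"
begin

abbreviation ty :: "'a set \<Rightarrow> 'b pos \<Rightarrow> bool" where
  "ty S T \<equiv> pos_iso (subpos Q S) T"

lemma Gdist: "TA \<noteq> TB" "TA \<noteq> TC" "TB \<noteq> TC"
  using nAB nAC nBC pos_iso_refl by fastforce+

lemma noniso: "T1 \<in> {TA,TB,TC} \<Longrightarrow> T2 \<in> {TA,TB,TC} \<Longrightarrow> T1 \<noteq> T2 \<Longrightarrow> \<not> pos_iso T1 T2"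
  using nAB nAC nBC pos_iso_sym by blast

lemma ty_unique:
  assumes "ty S T1" "ty S T2" "T1 \<in> {TA,TB,TC}" "T2 \<in> {TA,TB,TC}"
  shows "T1 = T2"
proof (rule ccontr)
  assume "T1 \<noteq> T2"
  then have "\<not> pos_iso T1 T2" using noniso assms(3,4) by blast
  moreover have "pos_iso T1 T2" using pos_iso_trans[OF pos_iso_sym[OF assms(1)] assms(2)] .
  ultimately show False by blast
qed

lemma ty_ex: "S \<in> V \<Longrightarrow> \<exists>T\<in>{TA,TB,TC}. ty S T"
  using types by blast

definition tp :: "'a set \<Rightarrow> 'b pos" where
  "tp S = (SOME T. T \<in> {TA,TB,TC} \<and> ty S T)"

lemma tp: assumes "S \<in> V" shows "tp S \<in> {TA,TB,TC}" "ty S (tp S)"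
proof -
  have "\<exists>T. T \<in> {TA,TB,TC} \<and> ty S T" using ty_ex[OF assms] by blast
  then have "tp S \<in> {TA,TB,TC} \<and> ty S (tp S)" unfolding tp_def by (rule someI_ex)
  then show "tp S \<in> {TA,TB,TC}" "ty S (tp S)" by blast+
qed

lemma tp_eq: assumes "S \<in> V" "ty S T" "T \<in> {TA,TB,TC}" shows "tp S = T"
  using ty_unique[OF tp(2)[OF assms(1)] assms(2) tp(1)[OF assms(1)] assms(3)] .

lemma third:
  assumes "x \<in> {TA,TB,TC}" "T1 \<in> {TA,TB,TC}" "T2 \<in> {TA,TB,TC}" "T3 \<in> {TA,TB,TC}"
    "T1 \<noteq> T2" "T2 \<noteq> T3" "T1 \<noteq> T3" "x \<noteq> T1" "x \<noteq> T3"
  shows "x = T2"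
  using assms by auto

definition swalk :: "'a set list \<Rightarrow> bool" where
  "swalk ws \<longleftrightarrow> walk ws \<and> 3 \<le> length ws \<and>
     (\<exists>P1\<in>{TA,TB,TC}. \<exists>P2\<in>{TA,TB,TC}. \<exists>P3\<in>{TA,TB,TC}. P1 \<noteq> P2 \<and> P2 \<noteq> P3 \<and> P1 \<noteq> P3 \<and>
        ty (hd ws) P1 \<and> (\<forall>i. 0 < i \<and> i < length ws - 1 \<longrightarrow> ty (ws ! i) P2) \<and> ty (last ws) P3)"

lemma swalk_sp: "swalk ws \<Longrightarrow> distinct ws \<Longrightarrow> special_path Q n {TA,TB,TC} ws"
  unfolding swalk_def special_path_def exch_path_def walk_def by blast

lemma erase: "swalk ws \<Longrightarrow> \<exists>ps. special_path Q n {TA,TB,TC} ps \<and> length ps \<le> length ws"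
proof (induction "length ws" arbitrary: ws rule: less_induct)
  case less
  show ?case
  proof (cases "distinct ws")
    case True then show ?thesis using swalk_sp[OF less.prems] by blast
  next
    case False
    define L where "L = length ws"
    obtain a b where ab: "a < b" "b < L" "ws ! a = ws ! b"
      using False unfolding L_def distinct_conv_nth by (metis linorder_neqE_nat)
    have w: "walk ws" and L3: "3 \<le> L" using less.prems unfolding swalk_def L_def by blast+
    obtain P1 P2 P3 where P: "P1 \<in> {TA,TB,TC}" "P2 \<in> {TA,TB,TC}" "P3 \<in> {TA,TB,TC}"
      "P1 \<noteq> P2" "P2 \<noteq> P3" "P1 \<noteq> P3" "ty (hd ws) P1"
      "\<forall>i. 0 < i \<and> i < L - 1 \<longrightarrow> ty (ws ! i) P2" "ty (last ws) P3"
      using less.prems unfolding swalk_def L_def by blast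
    have ne: "ws \<noteq> []" using w unfolding walk_def by blast
    have hd0: "hd ws = ws ! 0" using ne by (simp add: hd_conv_nth)
    have lastL: "last ws = ws ! (L - 1)" using ne unfolding L_def by (simp add: last_conv_nth)
    have a0: "0 < a"
    proof (rule ccontr)
      assume "\<not> 0 < a" then have "a = 0" by simp
      then have tb: "ty (ws ! b) P1" using P(7) hd0 ab(3) by simp
      show False
      proof (cases "b = L - 1")
        case True
        then have "ty (ws ! b) P3" using P(9) lastL by simp
        then show False using ty_unique[OF tb _ P(1) P(3)] P(6) by blast
      next
        case False
        then have "ty (ws ! b) P2" using P(8) ab \<open>a = 0\<close> by simp
        then show False using ty_unique[OF tb _ P(1) P(2)] P(4) by blast
      qed
    qed
    have bL: "b < L - 1"
    proof (rule ccontr)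
      assume "\<not> b < L - 1" then have "b = L - 1" using ab by simp
      then have tb: "ty (ws ! a) P3" using P(9) lastL ab(3) by simp
      have "0 < a \<and> a < L - 1" using a0 ab \<open>b = L - 1\<close> by simp
      then have "ty (ws ! a) P2" using P(8) by blast
      then show False using ty_unique[OF tb _ P(3) P(2)] P(5) by blast
    qed
    define f where "f i = (if i \<le> a then i else i + (b - a))" for i
    define ws' where "ws' = take (Suc a) ws @ drop (Suc b) ws"
    define L' where "L' = length ws'"
    have L': "L' = L - (b - a)" unfolding L'_def ws'_def using ab by (simp add: L_def min_def)
    have nth': "ws' ! i = ws ! f i" if "i < L'" for i
    proof (cases "i \<le> a")
      case True
      then show ?thesis unfolding ws'_def f_def using ab by (simp add: nth_append L_def)
    next
      case False
      then have "ws' ! i = drop (Suc b) ws ! (i - Suc a)"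
        unfolding ws'_def using ab by (simp add: nth_append L_def min_def)
      also have "\<dots> = ws ! (Suc b + (i - Suc a))" using that L' ab unfolding L_def
        by (subst nth_drop) auto
      also have "Suc b + (i - Suc a) = f i" unfolding f_def using False ab by simp
      finally show ?thesis .
    qed
    have fL: "f (L' - 1) = L - 1" unfolding f_def using L' ab a0 bL by auto
    have L'3: "3 \<le> L'" using L' ab a0 bL by simp
    have "swalk ws'"
      unfolding swalk_def
    proof (intro conjI)
      show "3 \<le> length ws'" using L'3 unfolding L'_def .
      show "walk ws'"
        unfolding walk_def
      proof (intro conjI allI impI)
        show "ws' \<noteq> []" using L'3 unfolding L'_def by auto
        show "set ws' \<subseteq> V" using w unfolding walk_def ws'_def
          using set_take_subset set_drop_subset by fastforce
        fix i assume i: "Suc i < length ws'"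
        then have i': "Suc i < L'" unfolding L'_def .
        have adj: "\<forall>j. Suc j < L \<longrightarrow> exch_adj (ws ! j) (ws ! Suc j)" using w unfolding walk_def L_def by blast
        show "exch_adj (ws' ! i) (ws' ! Suc i)"
        proof (cases "i < a")
          case True
          then show ?thesis using nth'[of i] nth'[of "Suc i"] i' adj ab unfolding f_def by simp
        next
          case False
          show ?thesis
          proof (cases "i = a")
            case True
            then have "ws' ! i = ws ! b" "ws' ! Suc i = ws ! Suc b"
              using nth'[of i] nth'[of "Suc i"] i' ab unfolding f_def by auto
            then show ?thesis using adj bL by simp
          next
            case False
            then have "i > a" using \<open>\<not> i < a\<close> by simp
            then have "ws' ! i = ws ! (i + (b - a))" "ws' ! Suc i = ws ! Suc (i + (b - a))"
              using nth'[of i] nth'[of "Suc i"] i' unfolding f_def by auto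
            moreover have "Suc (i + (b - a)) < L" using i' L' ab by simp
            ultimately show ?thesis using adj by simp
          qed
        qed
      qed
      have hd': "hd ws' = hd ws" unfolding ws'_def using ne by (cases ws) auto
      have last': "last ws' = last ws"
      proof -
        have "ws' \<noteq> []" using L'3 unfolding L'_def by auto
        then have "last ws' = ws' ! (L' - 1)" unfolding L'_def by (simp add: last_conv_nth)
        also have "\<dots> = ws ! (L - 1)" using nth'[of "L' - 1"] fL L'3 by simp
        finally show ?thesis using lastL by simp
      qed
      have mid: "\<forall>i. 0 < i \<and> i < length ws' - 1 \<longrightarrow> ty (ws' ! i) P2"
      proof (intro allI impI)
        fix i assume i: "0 < i \<and> i < length ws' - 1"
        then have "i < L'" unfolding L'_def by linarith
        then have "ws' ! i = ws ! f i" using nth'[of i] by simp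
        moreover have "0 < f i \<and> f i < L - 1" using i L' ab bL unfolding f_def L'_def by auto
        ultimately show "ty (ws' ! i) P2" using P(8) by simp
      qed
      show "\<exists>P1\<in>{TA,TB,TC}. \<exists>P2\<in>{TA,TB,TC}. \<exists>P3\<in>{TA,TB,TC}. P1 \<noteq> P2 \<and> P2 \<noteq> P3 \<and> P1 \<noteq> P3 \<and>
        ty (hd ws') P1 \<and> (\<forall>i. 0 < i \<and> i < length ws' - 1 \<longrightarrow> ty (ws' ! i) P2) \<and> ty (last ws') P3"
        apply (rule bexI[where x=P1], rule bexI[where x=P2], rule bexI[where x=P3])
        using P hd' last' mid by simp_all
    qed
    moreover have "length ws' < length ws" using L' L'_def L_def ab by simp
    ultimately obtain ps where "special_path Q n {TA,TB,TC} ps \<and> length ps \<le> length ws'"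
      using less.hyps by blast
    then show ?thesis using \<open>length ws' < length ws\<close> by auto
  qed
qed


lemma walk_nth_V: "walk w \<Longrightarrow> l < length w \<Longrightarrow> w ! l \<in> V"
  unfolding walk_def using nth_mem by blast

lemma window:
  assumes w: "walk w" and idx: "i0 < length w" "i1 < length w" "i2 < length w"
    and T: "T1 \<in> {TA,TB,TC}" "T2 \<in> {TA,TB,TC}" "T3 \<in> {TA,TB,TC}" "T1 \<noteq> T2" "T2 \<noteq> T3" "T1 \<noteq> T3"
    and ty: "ty (w ! i0) T1" "ty (w ! i1) T2" "ty (w ! i2) T3"
  shows "\<exists>ws. swalk ws \<and> length ws \<le> length w"
proof -
  define G where "G = {TA,TB,TC}"
  define g where "g l = tp (w ! l)" for l
  have gG: "g l \<in> G" if "l < length w" for l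
    unfolding g_def G_def using tp(1)[OF walk_nth_V[OF w that]] .
  have gty: "ty (w ! l) (g l)" if "l < length w" for l
    unfolding g_def using tp(2)[OF walk_nth_V[OF w that]] .
  define win where "win i j \<longleftrightarrow> j < length w \<and> i \<le> j \<and> g ` {i..j} = G" for i j
  have g0: "g i0 = T1" "g i1 = T2" "g i2 = T3"
    unfolding g_def using tp_eq[OF walk_nth_V[OF w idx(1)] ty(1) T(1)]
      tp_eq[OF walk_nth_V[OF w idx(2)] ty(2) T(2)] tp_eq[OF walk_nth_V[OF w idx(3)] ty(3) T(3)] by auto
  have "win 0 (0 + (length w - 1))"
  proof -
    have "g ` {0..length w - 1} \<subseteq> G" using gG idx by auto
    moreover have "T1 \<in> g ` {0..length w - 1}" "T2 \<in> g ` {0..length w - 1}" "T3 \<in> g ` {0..length w - 1}"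
      using g0 idx by (auto intro!: image_eqI)
    then have "G \<subseteq> g ` {0..length w - 1}" using T unfolding G_def by auto
    ultimately show ?thesis unfolding win_def using idx by auto
  qed
  then have "\<exists>k. \<exists>i. win i (i + k)" by blast
  then obtain k where k: "\<exists>i. win i (i + k)" and kmin: "\<forall>m<k. \<not> (\<exists>i. win i (i + m))"
    using exists_least_iff[of "\<lambda>k. \<exists>i. win i (i + k)"] by blast
  then obtain i where wi: "win i (i + k)" by blast
  define j where "j = i + k"
  have jl: "j < length w" and gim: "g ` {i..j} = G" using wi unfolding win_def j_def by auto
  have three: "\<not> G \<subseteq> {x, y}" for x y unfolding G_def using Gdist by auto
  have k1: "k \<noteq> 0"
  proof
    assume "k = 0"
    then have "G = {g i}" using gim unfolding j_def by simp
    then show False using three[of "g i" "g i"] by simp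
  qed
  have c1: "g l \<noteq> g i" if "i < l" "l \<le> j" for l
  proof
    assume eq: "g l = g i"
    have "g ` {Suc i..j} = G"
    proof
      show "g ` {Suc i..j} \<subseteq> G" using gim by auto
      show "G \<subseteq> g ` {Suc i..j}"
      proof
        fix x assume "x \<in> G"
        then obtain l' where l': "l' \<in> {i..j}" "x = g l'" using gim by auto
        show "x \<in> g ` {Suc i..j}"
        proof (cases "l' = i")
          case True then show ?thesis using eq that l' by (auto intro!: image_eqI[of _ _ l])
        next
          case False then show ?thesis using l' by auto
        qed
      qed
    qed
    then have "win (Suc i) (Suc i + (k - 1))" unfolding win_def j_def using jl k1 that j_def by auto
    moreover have "k - 1 < k" using k1 by simp
    ultimately show False using kmin by blast
  qed
  have c2: "g l \<noteq> g j" if "i \<le> l" "l < j" for l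
  proof
    assume eq: "g l = g j"
    have "g ` {i..j - 1} = G"
    proof
      show "g ` {i..j - 1} \<subseteq> G" using gim by auto
      show "G \<subseteq> g ` {i..j - 1}"
      proof
        fix x assume "x \<in> G"
        then obtain l' where l': "l' \<in> {i..j}" "x = g l'" using gim by auto
        show "x \<in> g ` {i..j - 1}"
        proof (cases "l' = j")
          case True then show ?thesis using eq that l' by (auto intro!: image_eqI[of _ _ l])
        next
          case False then show ?thesis using l' by auto
        qed
      qed
    qed
    then have "win i (i + (k - 1))" unfolding win_def j_def using jl k1 j_def by auto
    moreover have "k - 1 < k" using k1 by simp
    ultimately show False using kmin by blast
  qed
  have ij: "g i \<noteq> g j" using c1[of j] k1 unfolding j_def by simp
  obtain l where l: "l \<in> {i..j}" "g l \<notin> {g i, g j}"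
    using three[of "g i" "g j"] gim by blast
  have lij: "i < l" "l < j" using l by (auto simp: order.order_iff_strict)
  define T2' where "T2' = g l"
  have mid: "g l' = T2'" if "i < l'" "l' < j" for l'
  proof -
    have "g l' \<in> G" "g i \<in> G" "g j \<in> G" "g l \<in> G" using gG that jl lij by auto
    moreover have "g l' \<noteq> g i" "g l' \<noteq> g j" using c1[of l'] c2[of l'] that by auto
    moreover have "g i \<noteq> g l" "g l \<noteq> g j" using l(2) by auto
    ultimately show ?thesis unfolding T2'_def G_def
      using third[of "g l'" "g i" "g l" "g j"] ij by blast
  qed
  define ws where "ws = take (Suc k) (drop i w)"
  have lws: "length ws = Suc k" unfolding ws_def using jl j_def by simp
  have nws: "ws ! l' = w ! (i + l')" if "l' \<le> k" for l'
    unfolding ws_def using that jl j_def by simp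
  have "swalk ws"
    unfolding swalk_def
  proof (intro conjI)
    show "3 \<le> length ws" using lws lij j_def by simp
    show "walk ws"
      unfolding walk_def
    proof (intro conjI allI impI)
      show "ws \<noteq> []" using lws by auto
      show "set ws \<subseteq> V" using w unfolding walk_def ws_def
        by (meson order.trans set_drop_subset set_take_subset)
      fix l' assume "Suc l' < length ws"
      then have "Suc (i + l') < length w" "Suc l' \<le> k" "l' \<le> k" using lws jl j_def by auto
      then show "exch_adj (ws ! l') (ws ! Suc l')" using w nws[of l'] nws[of "Suc l'"]
        unfolding walk_def by simp
    qed
    have "ws \<noteq> []" using lws by auto
    then have "hd ws = w ! i" using nws[of 0] by (simp add: hd_conv_nth)
    then have F1: "ty (hd ws) (g i)" using gty jl j_def by simp
    have "last ws = w ! j" using nws[of k] lws j_def \<open>ws \<noteq> []\<close> by (simp add: last_conv_nth)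
    then have F2: "ty (last ws) (g j)" using gty jl by simp
    have F3: "\<forall>l'. 0 < l' \<and> l' < length ws - 1 \<longrightarrow> ty (ws ! l') T2'"
    proof (intro allI impI)
      fix l' assume a: "0 < l' \<and> l' < length ws - 1"
      then have "ws ! l' = w ! (i + l')" using nws lws by simp
      moreover have "g (i + l') = T2'" using mid a lws j_def by simp
      moreover have "i + l' < length w" using a lws jl j_def by simp
      ultimately show "ty (ws ! l') T2'" using gty by metis
    qed
    have M: "g i \<in> {TA,TB,TC}" "g j \<in> {TA,TB,TC}" "T2' \<in> {TA,TB,TC}"
      using gG jl lij unfolding G_def T2'_def by auto
    have D: "g i \<noteq> T2'" "T2' \<noteq> g j" using l(2) unfolding T2'_def by auto
    show "\<exists>P1\<in>{TA,TB,TC}. \<exists>P2\<in>{TA,TB,TC}. \<exists>P3\<in>{TA,TB,TC}. P1 \<noteq> P2 \<and> P2 \<noteq> P3 \<and> P1 \<noteq> P3 \<and>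
        ty (hd ws) P1 \<and> (\<forall>i. 0 < i \<and> i < length ws - 1 \<longrightarrow> ty (ws ! i) P2) \<and> ty (last ws) P3"
      apply (rule bexI[where x="g i"], rule bexI[where x="T2'"], rule bexI[where x="g j"])
      using M D ij F1 F2 F3 by simp_all
  qed
  moreover have "length ws \<le> length w" using lws jl j_def by simp
  ultimately show ?thesis by blast
qed

lemma Wlem:
  assumes minl: "\<forall>ws. special_path Q n {TA,TB,TC} ws \<longrightarrow> Lmin \<le> length ws"
    and S: "S1 \<in> V" "S2 \<in> V" "S3 \<in> V"
    and T: "T1 \<in> {TA,TB,TC}" "T2 \<in> {TA,TB,TC}" "T3 \<in> {TA,TB,TC}" "T1 \<noteq> T2" "T2 \<noteq> T3" "T1 \<noteq> T3"
    and ty: "ty S1 T1" "ty S2 T2" "ty S3 T3"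
  shows "Lmin \<le> Suc (card (S1 - S2) + card (S2 - S3))"
proof -
  obtain ws1 where w1: "walk ws1" "hd ws1 = S1" "last ws1 = S2" "length ws1 = Suc (card (S1 - S2))"
    using exchange[OF S(1,2)] by blast
  obtain ws2 where w2: "walk ws2" "hd ws2 = S2" "last ws2 = S3" "length ws2 = Suc (card (S2 - S3))"
    using exchange[OF S(2,3)] by blast
  have "S2 \<noteq> S3"
  proof
    assume "S2 = S3" then have "T2 = T3" using ty_unique[OF ty(2) _ T(2,3)] ty(3) by simp
    then show False using T by blast
  qed
  have ne1: "ws1 \<noteq> []" using w1 by auto
  have ne2: "tl ws2 \<noteq> []"
  proof
    assume "tl ws2 = []"
    moreover have "ws2 \<noteq> []" using w2(1) unfolding walk_def by blast
    ultimately have "ws2 = [hd ws2]" by (cases ws2) auto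
    then have "last ws2 = hd ws2" by (metis last.simps)
    then show False using w2 \<open>S2 \<noteq> S3\<close> by simp
  qed
  define w where "w = ws1 @ tl ws2"
  have ww: "walk w" unfolding w_def using walk_app[OF w1(1) w2(1)] w1(3) w2(2) by simp
  have lw: "length w = Suc (card (S1 - S2) + card (S2 - S3))" unfolding w_def using w1(4) w2(4) by simp
  have e0: "w ! 0 = S1" unfolding w_def using ne1 w1(2) by (simp add: nth_append hd_conv_nth)
  have e1: "w ! (length ws1 - 1) = S2" unfolding w_def using ne1 w1(3) by (simp add: nth_append last_conv_nth)
  have e2: "w ! (length w - 1) = S3"
  proof -
    have "w ! (length w - 1) = last w" using ww unfolding walk_def by (simp add: last_conv_nth)
    also have "\<dots> = last (tl ws2)" unfolding w_def using ne2 by simp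
    also have "\<dots> = last ws2" using ne2 by (metis last_tl)
    finally show ?thesis using w2(3) by simp
  qed
  have "\<exists>ws. swalk ws \<and> length ws \<le> length w"
    apply (rule window[OF ww, of 0 "length ws1 - 1" "length w - 1" T1 T2 T3])
    using lw w1(4) T ty e0 e1 e2 by auto
  then obtain ws where "swalk ws" "length ws \<le> length w" by blast
  then obtain ps where ps: "special_path Q n {TA,TB,TC} ps" "length ps \<le> length ws"
    using erase by blast
  have "Lmin \<le> length ps" using minl ps(1) by blast
  then show ?thesis using ps(2) \<open>length ws \<le> length w\<close> lw by linarith
qed

end



locale typedW = typed Q n TA TB TC for Q :: "'a pos" and n :: nat and TA TB TC :: "'b pos" +
  fixes r :: nat
  assumes Wr: "\<lbrakk>S1 \<in> exch_vertices Q n; S2 \<in> exch_vertices Q n; S3 \<in> exch_vertices Q n;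
     T1 \<in> {TA,TB,TC}; T2 \<in> {TA,TB,TC}; T3 \<in> {TA,TB,TC}; T1 \<noteq> T2; T2 \<noteq> T3; T1 \<noteq> T3;
     pos_iso (subpos Q S1) T1; pos_iso (subpos Q S2) T2; pos_iso (subpos Q S3) T3\<rbrakk>
     \<Longrightarrow> r \<le> card (S1 - S2) + card (S2 - S3)"
begin

lemma W_ABC: "S1 \<in> V \<Longrightarrow> S2 \<in> V \<Longrightarrow> S3 \<in> V \<Longrightarrow> ty S1 TA \<Longrightarrow> ty S2 TB \<Longrightarrow> ty S3 TC \<Longrightarrow>
  r \<le> card (S1 - S2) + card (S2 - S3)"
  using Wr[of S1 S2 S3 TA TB TC] Gdist by simp
lemma W_BAC: "S1 \<in> V \<Longrightarrow> S2 \<in> V \<Longrightarrow> S3 \<in> V \<Longrightarrow> ty S1 TB \<Longrightarrow> ty S2 TA \<Longrightarrow> ty S3 TC \<Longrightarrow>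
  r \<le> card (S1 - S2) + card (S2 - S3)"
  using Wr[of S1 S2 S3 TB TA TC] Gdist by simp
lemma W_CBA: "S1 \<in> V \<Longrightarrow> S2 \<in> V \<Longrightarrow> S3 \<in> V \<Longrightarrow> ty S1 TC \<Longrightarrow> ty S2 TB \<Longrightarrow> ty S3 TA \<Longrightarrow>
  r \<le> card (S1 - S2) + card (S2 - S3)"
  using Wr[of S1 S2 S3 TC TB TA] Gdist by simp
lemma W_ACB: "S1 \<in> V \<Longrightarrow> S2 \<in> V \<Longrightarrow> S3 \<in> V \<Longrightarrow> ty S1 TA \<Longrightarrow> ty S2 TC \<Longrightarrow> ty S3 TB \<Longrightarrow>
  r \<le> card (S1 - S2) + card (S2 - S3)"
  using Wr[of S1 S2 S3 TA TC TB] Gdist by simp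

lemma Ucontra:
  assumes V: "Av \<in> V" "Cv \<in> V" "v1 \<in> V" "U \<in> V"
    and t: "ty Av TA" "ty v1 TB" "ty Cv TC"
    and c: "card (v1 - Av) = 1" "card (Av - U) = 1" "card (U - Cv) + 1 = m"
      "card (U - v1) = e" "card (v1 - U) = e" "card (v1 - Cv) + 1 = m + e"
      "card (v1 - Cv) + 1 \<le> r" "1 \<le> e" "2 \<le> m"
  shows False
proof -
  have rm: "m + e \<le> r" using c by simp
  consider "ty U TA" | "ty U TB" | "ty U TC" using types V(4) by blast
  then show False
  proof cases
    case 1
    have "r \<le> card (v1 - U) + card (U - Cv)" using W_BAC[OF V(3) V(4) V(2) t(2) 1 t(3)] .
    then show False using rm c by simp
  next
    case 2
    have "r \<le> card (Av - U) + card (U - Cv)" using W_ABC[OF V(1) V(4) V(2) t(1) 2 t(3)] .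
    then show False using rm c by simp
  next
    case 3
    have "r \<le> card (U - v1) + card (v1 - Av)" using W_CBA[OF V(4) V(3) V(1) 3 t(2) t(1)] .
    then show False using rm c by simp
  qed
qed


lemma adj_single:
  assumes "exch_adj S T"
  obtains a b where "S - T = {a}" "T - S = {b}"
  using assms unfolding exch_adj_def by (meson card_1_singletonE)

lemma rm:
  assumes AV: "Av \<in> V" and CV: "Cv \<in> V" and v1V: "v1 \<in> V"
    and tA: "ty Av TA" and tB: "ty v1 TB" and tC: "ty Cv TC"
    and adj: "exch_adj Av v1"
    and b1: "card (v1 - Cv) + 1 \<le> r" and b2: "card (Av - Cv) \<le> r" and m2: "2 \<le> card (Av - Cv)"
  shows "r = card (Av - Cv) \<and> (\<exists>p j. p \<in> Av - Cv \<and> j \<in> Cv - Av \<and> v1 = insert j (Av - {p}))"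
proof -
  define P where "P = Av - Cv"
  define R where "R = Cv - Av"
  define m where "m = card P"
  have fA: "finite Av" and fC: "finite Cv" and f1: "finite v1" using VD(4) AV CV v1V by blast+
  have dA: "downset Q Av" and dC: "downset Q Cv" and d1: "downset Q v1" using VD(1) AV CV v1V by blast+
  have sA: "Av \<subseteq> fst Q" and sC: "Cv \<subseteq> fst Q" and s1: "v1 \<subseteq> fst Q" using VD(3) AV CV v1V by blast+
  have cR: "card R = m" unfolding R_def m_def P_def using card_diff_sym[OF AV CV] by simp
  have fP: "finite P" and fR: "finite R" unfolding P_def R_def using fA fC by simp_all
  obtain \<alpha> \<beta> where ab: "Av - v1 = {\<alpha>}" "v1 - Av = {\<beta>}" using adj_single[OF adj] by blast
  have al: "\<alpha> \<in> Av" "\<alpha> \<notin> v1" and be: "\<beta> \<in> v1" "\<beta> \<notin> Av" using ab by blast+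
  have v1eq: "v1 = insert \<beta> (Av - {\<alpha>})" using ab by blast
  have amax: "\<forall>z\<in>P. snd Q \<alpha> z \<longrightarrow> z = \<alpha>"
  proof (intro ballI impI)
    fix z assume z: "z \<in> P" "snd Q \<alpha> z"
    show "z = \<alpha>"
    proof (rule ccontr)
      assume "z \<noteq> \<alpha>"
      then have "z \<in> v1" using z(1) v1eq unfolding P_def by blast
      then have "\<alpha> \<in> v1" using downD[OF d1 _ _ z(2)] al(1) sA by blast
      then show False using al by blast
    qed
  qed
  have bmin: "\<forall>z\<in>R. snd Q z \<beta> \<longrightarrow> z = \<beta>"
  proof (intro ballI impI)
    fix z assume z: "z \<in> R" "snd Q z \<beta>"
    have "z \<in> v1" using downD[OF d1 be(1) _ z(2)] z(1) sC unfolding R_def by blast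
    then show "z = \<beta>" using z(1) v1eq unfolding R_def by blast
  qed
  have Pne: "P \<noteq> {}"
  proof
    assume "P = {}" then have "card P = 0" by simp
    then show False using m2 unfolding P_def by simp
  qed
  have Rne: "R \<noteq> {}"
  proof
    assume "R = {}" then have "card R = 0" by simp
    then show False using m2 cR unfolding m_def P_def by simp
  qed
  obtain q where q: "q \<in> P" "\<forall>z\<in>P. snd Q q z \<longrightarrow> z = q" "\<alpha> \<in> P \<longrightarrow> q = \<alpha>"
  proof (cases "\<alpha> \<in> P")
    case True then show ?thesis using that amax by blast
  next
    case False
    have "P \<subseteq> fst Q" unfolding P_def using sA by blast
    then obtain t where "t \<in> P" "\<forall>z\<in>P. snd Q t z \<longrightarrow> z = t" using ex_max[OF fP Pne] by blast
    then show ?thesis using that False by blast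
  qed
  obtain j where j: "j \<in> R" "\<forall>z\<in>R. snd Q z j \<longrightarrow> z = j" "\<beta> \<in> R \<longrightarrow> j = \<beta>"
  proof (cases "\<beta> \<in> R")
    case True then show ?thesis using that bmin by blast
  next
    case False
    have "R \<subseteq> fst Q" unfolding R_def using sC by blast
    then obtain t where "t \<in> R" "\<forall>z\<in>R. snd Q z t \<longrightarrow> z = t" using ex_min[OF fR Rne] by blast
    then show ?thesis using that False by blast
  qed
  have cA: "card Av = n" using VD(2) AV by blast
  have npos: "0 < n" using cA Pne fA unfolding P_def by (metis card_gt_0_iff Diff_empty Diff_subset subset_empty)
  show ?thesis
  proof (cases "\<alpha> \<in> P \<and> \<beta> \<in> R")
    case True
    have "v1 - Cv = P - {\<alpha>}" using v1eq True unfolding P_def R_def by blast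
    then have "card (v1 - Cv) = m - 1" using True fP unfolding m_def by simp
    moreover have "card (Av - v1) = 1" using ab by simp
    moreover have "r \<le> card (Av - v1) + card (v1 - Cv)" using W_ABC[OF AV v1V CV tA tB tC] .
    ultimately have "r \<le> m" using m2 unfolding m_def P_def by simp
    then have "r = card (Av - Cv)" using b2 unfolding m_def P_def by simp
    moreover have "\<alpha> \<in> Av - Cv \<and> \<beta> \<in> Cv - Av \<and> v1 = insert \<beta> (Av - {\<alpha>})"
      using True v1eq unfolding P_def R_def by blast
    ultimately show ?thesis by blast
  next
    case False
    define U where "U = insert j (Av - {q})"
    have qA: "q \<in> Av" "q \<notin> Cv" and jC: "j \<in> Cv" "j \<notin> Av" using q(1) j(1) unfolding P_def R_def by blast+
    have dU: "downset Q U"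
      unfolding downset_def
    proof (intro conjI ballI impI)
      show "U \<subseteq> fst Q" unfolding U_def using sA sC jC by blast
      fix x y assume x: "x \<in> U" and y: "y \<in> fst Q" and yx: "snd Q y x"
      show "y \<in> U"
      proof (cases "x = j")
        case True
        then have yC: "y \<in> Cv" using downD[OF dC jC(1) y] yx by simp
        show ?thesis
        proof (cases "y \<in> Av")
          case True
          then have "y \<noteq> q" using yC qA by blast
          then show ?thesis using True unfolding U_def by blast
        next
          case False
          then have "y = j" using j(2) yC yx \<open>x = j\<close> unfolding R_def by blast
          then show ?thesis unfolding U_def by blast
        qed
      next
        case False
        then have xA: "x \<in> Av" "x \<noteq> q" using x unfolding U_def by blast+
        have yA: "y \<in> Av" using downD[OF dA xA(1) y yx] .
        have "y \<noteq> q"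
        proof
          assume "y = q"
          show False
          proof (cases "x \<in> Cv")
            case True
            then have "q \<in> Cv" using downD[OF dC True y yx] \<open>y = q\<close> by simp
            then show False using qA by blast
          next
            case False
            then have "x \<in> P" using xA unfolding P_def by blast
            then show False using q(2) yx \<open>y = q\<close> xA(2) by blast
          qed
        qed
        then show ?thesis using yA unfolding U_def by blast
      qed
    qed
    have cU: "card U = n"
    proof -
      have "j \<notin> Av - {q}" using jC by blast
      then have "card U = Suc (card (Av - {q}))" unfolding U_def using fA by simp
      also have "\<dots> = card Av" using card_Suc_Diff1[OF fA qA(1)] .
      finally show ?thesis using cA by simp
    qed
    have UV: "U \<in> V" using VI[OF dU cU] .
    have c1: "card (v1 - Av) = 1" using ab by simp
    have c2: "card (Av - U) = 1"
    proof -
      have "Av - U = {q}" unfolding U_def using qA jC by blast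
      then show ?thesis by simp
    qed
    have c3: "card (U - Cv) + 1 = m"
    proof -
      have "U - Cv = P - {q}" unfolding U_def P_def using jC by blast
      then have "card (U - Cv) = m - 1" using q(1) fP unfolding m_def by simp
      then show ?thesis using m2 unfolding m_def P_def by simp
    qed
    have mm: "2 \<le> m" using m2 unfolding m_def P_def .
    show ?thesis
    proof (cases "\<alpha> \<in> P")
      case True
      then have bR: "\<beta> \<notin> R" and qa: "q = \<alpha>" using False q(3) by blast+
      then have bC: "\<beta> \<notin> Cv" using be unfolding R_def by blast
      have jb: "j \<noteq> \<beta>" using bR j(1) by blast
      have e1: "U - v1 = {j}" unfolding U_def using v1eq qa jb jC by blast
      have e2: "v1 - U = {\<beta>}" unfolding U_def using v1eq qa jb be by blast
      have e3: "v1 - Cv = insert \<beta> (P - {\<alpha>})" using v1eq bC unfolding P_def by blast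
      have "\<beta> \<notin> P - {\<alpha>}" using be(2) unfolding P_def by blast
      then have "card (v1 - Cv) = Suc (card (P - {\<alpha>}))" unfolding e3 using fP by simp
      then have "card (v1 - Cv) = Suc (m - 1)" using True fP unfolding m_def by simp
      then have e3': "card (v1 - Cv) + 1 = m + 1" using mm by simp
      show ?thesis
        using Ucontra[OF AV CV v1V UV tA tB tC c1 c2 c3, of 1] e1 e2 e3' b1 mm by simp
    next
      case aP: False
      then have aC: "\<alpha> \<in> Cv" using al unfolding P_def by blast
      have qa: "q \<noteq> \<alpha>" using q(1) aP by blast
      show ?thesis
      proof (cases "\<beta> \<in> R")
        case True
        then have jb: "j = \<beta>" using j(3) by blast
        have e1: "U - v1 = {\<alpha>}" unfolding U_def using v1eq qa jb al by blast
        have e2: "v1 - U = {q}" unfolding U_def using v1eq qa jb qA be by blast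
        have e3: "v1 - Cv = P" using v1eq True aC unfolding P_def R_def by blast
        have e3': "card (v1 - Cv) + 1 = m + 1" unfolding e3 m_def by simp
        show ?thesis
          using Ucontra[OF AV CV v1V UV tA tB tC c1 c2 c3, of 1] e1 e2 e3' b1 mm by simp
      next
        case bR: False
        then have bC: "\<beta> \<notin> Cv" using be unfolding R_def by blast
        have jb: "j \<noteq> \<beta>" using bR j(1) by blast
        have ja: "j \<noteq> \<alpha>" using jC al by blast
        have qb: "q \<noteq> \<beta>" using qA be by blast
        have e1: "U - v1 = {j, \<alpha>}" unfolding U_def using v1eq qa jb al jC by blast
        have e2: "v1 - U = {\<beta>, q}" unfolding U_def using v1eq qa jb be qA jC by auto
        have e3: "v1 - Cv = insert \<beta> P" using v1eq aC bC unfolding P_def by blast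
        have "\<beta> \<notin> P" using be(2) unfolding P_def by blast
        then have e3': "card (v1 - Cv) + 1 = m + 2" unfolding e3 m_def using fP by simp
        have "card (U - v1) = 2" "card (v1 - U) = 2" unfolding e1 e2 using ja qb by simp_all
        then show ?thesis
          using Ucontra[OF AV CV v1V UV tA tB tC c1 c2 c3, of 2] e3' b1 mm by simp
      qed
    qed
  qed
qed


lemma step1:
  assumes AV: "Av \<in> V" and CV: "Cv \<in> V" and v1V: "v1 \<in> V" and vlV: "vl \<in> V"
    and tA: "ty Av TA" and tC: "ty Cv TC" and tB1: "ty v1 TB" and tBl: "ty vl TB"
    and QU: "fst Q = Av \<union> Cv" and rm: "r = card (Av - Cv)" and r3: "3 \<le> r"
    and p1: "p1 \<in> Av - Cv" and j1: "j1 \<in> Cv - Av" and v1eq: "v1 = insert j1 (Av - {p1})"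
    and vl1: "card (Cv - vl) = 1"
    and SV: "S \<in> V" and SX: "Av \<inter> Cv \<subseteq> S" and SP: "\<not> Av - Cv \<subseteq> S" and SR: "\<not> Cv - Av \<subseteq> S"
  shows "\<not> ty S TA"
proof
  assume tS: "ty S TA"
  define P where "P = Av - Cv"
  define R where "R = Cv - Av"
  define X where "X = Av \<inter> Cv"
  define m where "m = card P"
  have fA: "finite Av" and fC: "finite Cv" and fS: "finite S" using VD(4) AV CV SV by blast+
  have dA: "downset Q Av" and dC: "downset Q Cv" and d1: "downset Q v1" and dS: "downset Q S"
    using VD(1) AV CV v1V SV by blast+
  have sS: "S \<subseteq> Av \<union> Cv" using VD(3)[OF SV] QU by simp
  have cA: "card Av = n" and cS: "card S = n" using VD(2) AV SV by blast+
  have cR: "card R = m" unfolding R_def m_def P_def using card_diff_sym[OF AV CV] by simp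
  have fP: "finite P" and fR: "finite R" and fX: "finite X" unfolding P_def R_def X_def using fA fC by simp_all
  have m3: "3 \<le> m" using r3 rm unfolding m_def P_def by simp
  have "r \<le> card (S - Cv) + card (Cv - vl)" using W_ACB[OF SV CV vlV tS tC tBl] .
  then have a1: "m \<le> card (S - Cv) + 1" using vl1 rm unfolding m_def P_def by simp
  have SC: "S - Cv = S \<inter> P" using sS unfolding P_def by blast
  have "S \<inter> P \<subset> P" using SP unfolding P_def by blast
  then have "card (S \<inter> P) < m" unfolding m_def using fP by (simp add: psubset_card_mono)
  then have cSP: "card (S \<inter> P) = m - 1" using a1 SC by simp
  obtain p where p: "p \<in> P" "p \<notin> S" using SP unfolding P_def by blast
  have "S \<inter> P \<subseteq> P - {p}" using p by blast
  moreover have "card (P - {p}) = m - 1" using p fP unfolding m_def by simp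
  ultimately have SPe: "S \<inter> P = P - {p}" using cSP fP by (metis card_subset_eq finite_Diff)
  have cAX: "card Av = card X + m" unfolding X_def m_def P_def using card_Int_Diff[OF fA, of Cv] .
  have "card S = card (S \<inter> Cv) + card (S - Cv)" using card_Int_Diff[OF fS] .
  moreover have "S \<inter> Cv = X \<union> (S \<inter> R)" using SX sS unfolding X_def R_def by blast
  moreover have "card (X \<union> (S \<inter> R)) = card X + card (S \<inter> R)"
    using fX fS by (intro card_Un_disjoint) (auto simp: X_def R_def)
  ultimately have "card (S \<inter> R) = 1" using cA cS cAX cSP SC m3 by simp
  then obtain j where SRe: "S \<inter> R = {j}" by (meson card_1_singletonE)
  have jR: "j \<in> R" "j \<in> S" using SRe by blast+
  have Seq: "S = insert j (Av - {p})"
  proof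
    show "S \<subseteq> insert j (Av - {p})" using sS SRe p unfolding R_def by blast
    show "insert j (Av - {p}) \<subseteq> S"
    proof
      fix x assume x: "x \<in> insert j (Av - {p})"
      show "x \<in> S"
      proof (cases "x = j")
        case True then show ?thesis using jR by simp
      next
        case False
        then have "x \<in> Av" "x \<noteq> p" using x by blast+
        then show ?thesis using SX SPe unfolding X_def P_def by blast
      qed
    qed
  qed
  have pj: "p \<noteq> p1 \<or> j \<noteq> j1"
  proof (rule ccontr)
    assume "\<not> (p \<noteq> p1 \<or> j \<noteq> j1)"
    then have "S = v1" using Seq v1eq by simp
    then have "ty S TB" using tB1 by simp
    then have "TA = TB" using ty_unique[OF tS] by simp
    then show False using Gdist by simp
  qed
  have p1v: "p1 \<notin> v1" using v1eq p1 j1 by blast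
  obtain q where q: "q \<in> P - {p}" "\<forall>z\<in>P - {p}. snd Q q z \<longrightarrow> z = q" "p1 \<noteq> p \<longrightarrow> q = p1"
  proof (cases "p1 \<noteq> p")
    case True
    have "\<forall>z\<in>P - {p}. snd Q p1 z \<longrightarrow> z = p1"
    proof (intro ballI impI)
      fix z assume z: "z \<in> P - {p}" "snd Q p1 z"
      show "z = p1"
      proof (rule ccontr)
        assume "z \<noteq> p1"
        then have "z \<in> v1" using z(1) v1eq unfolding P_def by blast
        moreover have "p1 \<in> fst Q" using p1 QU by blast
        ultimately have "p1 \<in> v1" using downD[OF d1 _ _ z(2)] by blast
        then show False using p1v by blast
      qed
    qed
    moreover have "p1 \<in> P - {p}" using p1 True unfolding P_def by blast
    ultimately show ?thesis using that True by blast
  next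
    case False
    have ne: "P - {p} \<noteq> {}"
    proof
      assume e: "P - {p} = {}" have "card (P - {p}) = 0" unfolding e by (rule card.empty)
      then show False using p fP m3 unfolding m_def by simp
    qed
    have "P - {p} \<subseteq> fst Q" unfolding P_def using QU by blast
    then obtain t where "t \<in> P - {p}" "\<forall>z\<in>P - {p}. snd Q t z \<longrightarrow> z = t"
      using ex_max[OF _ ne] fP by blast
    then show ?thesis using that False by blast
  qed
  obtain j' where j': "j' \<in> R - {j}" "\<forall>z\<in>R - {j}. snd Q z j' \<longrightarrow> z = j'" "j1 \<noteq> j \<longrightarrow> j' = j1"
  proof (cases "j1 \<noteq> j")
    case True
    have "\<forall>z\<in>R - {j}. snd Q z j1 \<longrightarrow> z = j1"
    proof (intro ballI impI)
      fix z assume z: "z \<in> R - {j}" "snd Q z j1"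
      have "z \<in> fst Q" using z(1) QU unfolding R_def by blast
      moreover have "j1 \<in> v1" using v1eq by blast
      ultimately have "z \<in> v1" using downD[OF d1 _ _ z(2)] by blast
      then show "z = j1" using z(1) v1eq unfolding R_def by blast
    qed
    moreover have "j1 \<in> R - {j}" using j1 True unfolding R_def by blast
    ultimately show ?thesis using that True by blast
  next
    case False
    have ne: "R - {j} \<noteq> {}"
    proof
      assume e: "R - {j} = {}" have "card (R - {j}) = 0" unfolding e by (rule card.empty)
      then show False using jR fR m3 cR by simp
    qed
    have "R - {j} \<subseteq> fst Q" unfolding R_def using QU by blast
    then obtain t where "t \<in> R - {j}" "\<forall>z\<in>R - {j}. snd Q z t \<longrightarrow> z = t"
      using ex_min[OF _ ne] fR by blast
    then show ?thesis using that False by blast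
  qed
  have qP: "q \<in> Av" "q \<notin> Cv" "q \<noteq> p" using q(1) unfolding P_def by blast+
  have pP: "p \<in> Av" "p \<notin> Cv" using p(1) unfolding P_def by blast+
  have jA: "j \<in> Cv" "j \<notin> Av" using jR unfolding R_def by blast+
  have j'A: "j' \<in> Cv" "j' \<notin> Av" "j' \<noteq> j" using j'(1) unfolding R_def by blast+
  define U where "U = insert j' (insert j (Av - {p, q}))"
  have dU: "downset Q U"
    unfolding downset_def
  proof (intro conjI ballI impI)
    show "U \<subseteq> fst Q" unfolding U_def using QU jA j'A by blast
    fix x y assume x: "x \<in> U" and y: "y \<in> fst Q" and yx: "snd Q y x"
    show "y \<in> U"
    proof (cases "x = j'")
      case True
      then have yC: "y \<in> Cv" using downD[OF dC j'A(1) y] yx by simp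
      show ?thesis
      proof (cases "y \<in> Av")
        case True
        then have "y \<noteq> p" "y \<noteq> q" using yC qP pP by blast+
        then show ?thesis using True unfolding U_def by blast
      next
        case False
        show ?thesis
        proof (cases "y = j")
          case True then show ?thesis unfolding U_def by blast
        next
          case False
          then have "y \<in> R - {j}" using yC \<open>y \<notin> Av\<close> unfolding R_def by blast
          then have "y = j'" using j'(2) yx \<open>x = j'\<close> by blast
          then show ?thesis unfolding U_def by blast
        qed
      qed
    next
      case xj': False
      show ?thesis
      proof (cases "x = j")
        case True
        then have yS: "y \<in> S" using downD[OF dS jR(2) y] yx by simp
        show ?thesis
        proof (cases "y = j")
          case True then show ?thesis unfolding U_def by blast
        next
          case False
          then have yA: "y \<in> Av" "y \<noteq> p" using yS Seq by blast+
          have "y \<noteq> q"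
          proof
            assume "y = q"
            then have "q \<in> Cv" using downD[OF dC jA(1) y] yx \<open>x = j\<close> by simp
            then show False using qP by blast
          qed
          then show ?thesis using yA unfolding U_def by blast
        qed
      next
        case False
        then have xA: "x \<in> Av" "x \<noteq> p" "x \<noteq> q" using x xj' unfolding U_def by blast+
        have yA: "y \<in> Av" using downD[OF dA xA(1) y yx] .
        have xS: "x \<in> S" using xA Seq by blast
        have "y \<noteq> p"
        proof
          assume "y = p"
          then have "p \<in> S" using downD[OF dS xS y yx] by simp
          then show False using p by blast
        qed
        moreover have "y \<noteq> q"
        proof
          assume yq: "y = q"
          show False
          proof (cases "x \<in> Cv")
            case True
            then have "q \<in> Cv" using downD[OF dC True y yx] yq by simp
            then show False using qP by blast
          next
            case False
            then have "x \<in> P - {p}" using xA unfolding P_def by blast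
            then show False using q(2) yx yq xA(3) by blast
          qed
        qed
        ultimately show ?thesis using yA unfolding U_def by blast
      qed
    qed
  qed
  have cU: "card U = n"
  proof -
    have c0: "card (Av - {p, q}) = card Av - 2" using fA pP qP by (simp add: card_Diff_subset)
    have "j \<notin> Av - {p, q}" using jA by blast
    then have c1: "card (insert j (Av - {p, q})) = Suc (card (Av - {p, q}))" using fA by simp
    have "j' \<notin> insert j (Av - {p, q})" using j'A by blast
    then have "card U = Suc (card (insert j (Av - {p, q})))" unfolding U_def using fA by simp
    then have "card U = card Av" using c0 c1 cAX m3 by simp
    then show ?thesis using cA by simp
  qed
  have UV: "U \<in> V" using VI[OF dU cU] .
  have p1pq: "p1 \<in> {p, q}" using q(3) by blast
  have j1jj: "j1 \<in> {j, j'}" using j'(3) by blast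
  have dUC: "card (U - Cv) + 2 = m"
  proof -
    have "U - Cv = P - {p, q}" unfolding U_def P_def using jA j'A by blast
    moreover have "card (P - {p, q}) = m - 2" using fP p(1) q(1) qP(3) unfolding m_def
      by (simp add: card_Diff_subset)
    ultimately show ?thesis using m3 by simp
  qed
  have dSU: "card (S - U) = 1"
  proof -
    have "S - U = {q}" unfolding U_def using Seq qP jA j'A by blast
    then show ?thesis by simp
  qed
  have dv1U: "card (v1 - U) = 1"
  proof -
    have "U - v1 = {j, j'} - {j1}" unfolding U_def using v1eq p1pq jA j'A by blast
    moreover have "card ({j, j'} - {j1}) = 1" using j1jj j'A(3) by auto
    ultimately have "card (U - v1) = 1" by simp
    then show ?thesis using card_diff_sym[OF UV v1V] by simp
  qed
  have dUv1: "card (U - v1) = 1" using dv1U card_diff_sym[OF UV v1V] by simp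
  have dv1A: "card (v1 - Av) = 1"
  proof -
    have "v1 - Av = {j1}" using v1eq j1 by blast
    then show ?thesis by simp
  qed
  have rmm: "r = m" using rm unfolding m_def P_def .
  consider "ty U TA" | "ty U TB" | "ty U TC" using types UV by blast
  then show False
  proof cases
    case 1
    have "r \<le> card (v1 - U) + card (U - Cv)" using W_BAC[OF v1V UV CV tB1 1 tC] .
    then show False using rmm dv1U dUC by simp
  next
    case 2
    have "r \<le> card (S - U) + card (U - Cv)" using W_ABC[OF SV UV CV tS 2 tC] .
    then show False using rmm dSU dUC by simp
  next
    case 3
    have "r \<le> card (U - v1) + card (v1 - Av)" using W_CBA[OF UV v1V AV 3 tB1 tA] .
    then show False using r3 dUv1 dv1A by simp
  qed
qed


lemma step2:
  assumes AV: "Av \<in> V" and CV: "Cv \<in> V"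
    and tA: "ty Av TA" and tC: "ty Cv TC"
    and QU: "fst Q = Av \<union> Cv" and rm: "card (Av - Cv) \<le> r"
    and hX: "\<forall>S\<in>V. Av \<inter> Cv \<subseteq> S \<and> \<not> Av - Cv \<subseteq> S \<and> \<not> Cv - Av \<subseteq> S \<longrightarrow> ty S TB"
    and SV: "S \<in> V" and SP: "\<not> Av - Cv \<subseteq> S" and SR: "\<not> Cv - Av \<subseteq> S"
  shows "\<not> ty S TA"
proof
  assume tS: "ty S TA"
  define P where "P = Av - Cv"
  define R where "R = Cv - Av"
  define X where "X = Av \<inter> Cv"
  define m where "m = card P"
  have fA: "finite Av" and fC: "finite Cv" and fS: "finite S" using VD(4) AV CV SV by blast+
  have dA: "downset Q Av" and dC: "downset Q Cv" and dS: "downset Q S"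
    using VD(1) AV CV SV by blast+
  have sS: "S \<subseteq> Av \<union> Cv" using VD(3)[OF SV] QU by simp
  have cA: "card Av = n" and cS: "card S = n" using VD(2) AV SV by blast+
  have cR: "card R = m" unfolding R_def m_def P_def using card_diff_sym[OF AV CV] by simp
  have fP: "finite P" and fR: "finite R" and fX: "finite X" unfolding P_def R_def X_def using fA fC by simp_all
  define a where "a = card (S \<inter> P)"
  define c where "c = card (S \<inter> R)"
  have "S \<inter> P \<subset> P" using SP unfolding P_def by blast
  then have am: "a < m" unfolding m_def a_def using fP by (simp add: psubset_card_mono)
  have "S \<inter> R \<subset> R" using SR unfolding R_def by blast
  then have cm: "c < m" unfolding c_def using fR cR by (metis psubset_card_mono)
  have cAX: "card Av = card X + m" unfolding X_def m_def P_def using card_Int_Diff[OF fA, of Cv] .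
  have split1: "card S = card (S \<inter> Cv) + card (S - Cv)" using card_Int_Diff[OF fS] .
  have SC: "S - Cv = S \<inter> P" using sS unfolding P_def by blast
  have SCv: "S \<inter> Cv = (S \<inter> X) \<union> (S \<inter> R)" unfolding X_def R_def by blast
  have "card ((S \<inter> X) \<union> (S \<inter> R)) = card (S \<inter> X) + card (S \<inter> R)"
    using fS by (intro card_Un_disjoint) (auto simp: X_def R_def)
  then have cSsum: "card S = card (S \<inter> X) + a + c" using split1 SC SCv unfolding a_def c_def by simp
  have "card (S \<inter> X) \<le> card X" using fX by (simp add: card_mono)
  then have acm: "m \<le> a + c" using cSsum cS cA cAX by simp
  define k where "k = m - c"
  have ka: "k \<le> a" unfolding k_def using acm by simp
  define D0 where "D0 = X \<union> (S \<inter> Av)"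
  have dX: "downset Q X" unfolding X_def using downset_Int[OF dA dC] .
  have dD0: "downset Q D0" unfolding D0_def using downset_Un[OF dX downset_Int[OF dS dA]] .
  have D0e: "D0 = X \<union> (S \<inter> P)" unfolding D0_def X_def P_def by blast
  have cD0: "card D0 = card X + a" unfolding D0e a_def
    using fX fS by (intro card_Un_disjoint) (auto simp: X_def P_def)
  obtain D where D: "downset Q D" "X \<subseteq> D" "D \<subseteq> D0" "card D = card X + k"
    using shrink[OF dX dD0, of "card X + k"] ka cD0 unfolding D0_def by auto
  define y where "y = D \<union> (S \<inter> Cv)"
  have dy: "downset Q y" unfolding y_def using downset_Un[OF D(1) downset_Int[OF dS dC]] .
  have ye: "y = D \<union> (S \<inter> R)" unfolding y_def using D(2) unfolding X_def R_def by blast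
  have fD: "finite D" using D(3) fX fS unfolding D0_def by (meson finite_Int finite_UnI finite_subset)
  have "card y = card D + c" unfolding ye c_def
    using fD fS D(3) by (intro card_Un_disjoint) (auto simp: D0_def X_def R_def)
  then have cy: "card y = n" using D(4) cA cAX cm unfolding k_def by simp
  have yV: "y \<in> V" using VI[OF dy cy] .
  have yX: "Av \<inter> Cv \<subseteq> y" using D(2) unfolding y_def X_def by blast
  have yP: "\<not> Av - Cv \<subseteq> y"
  proof
    assume h: "Av - Cv \<subseteq> y"
    obtain p where p: "p \<in> Av - Cv" "p \<notin> S" using SP by blast
    have "p \<in> y" using h p by blast
    then show False using p D(3) unfolding y_def D0_def X_def by blast
  qed
  have yR: "\<not> Cv - Av \<subseteq> y"
  proof
    assume h: "Cv - Av \<subseteq> y"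
    obtain j where j: "j \<in> Cv - Av" "j \<notin> S" using SR by blast
    have "j \<in> y" using h j by blast
    then show False using j D(3) unfolding y_def D0_def X_def by blast
  qed
  have ty: "ty y TB" using hX yV yX yP yR by blast
  have r1: "r \<le> card (S - y) + card (y - Cv)" using W_ABC[OF SV yV CV tS ty tC] .
  have e1: "S - y \<subseteq> (S \<inter> P) - D" unfolding y_def P_def using sS by blast
  have e2: "y - Cv = D \<inter> (S \<inter> P)" unfolding y_def P_def using D(3) unfolding D0_def X_def by blast
  have "card (S - y) \<le> card ((S \<inter> P) - D)" using e1 fS by (simp add: card_mono)
  moreover have "card ((S \<inter> P) - D) + card (D \<inter> (S \<inter> P)) = a"
    unfolding a_def using card_Int_Diff[of "S \<inter> P" D] fS by (simp add: Int_commute)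
  ultimately have "card (S - y) + card (y - Cv) \<le> a" using e2 by simp
  then show False using r1 am rm unfolding m_def P_def by simp
qed

end



lemma (in base) count:
  assumes TV: "T \<in> V" and AV: "A0 \<in> V" and CV: "C0 \<in> V"
  shows "card (A0 - C0) + card (T - (A0 \<union> C0)) \<le> card (T - A0) + card (T - C0)"
proof -
  have fT: "finite T" and fA: "finite A0" and fC: "finite C0" using VD(4) TV AV CV by blast+
  have cT: "card T = n" and cA: "card A0 = n" using VD(2) TV AV by blast+
  have e1: "card T = card (T \<inter> C0) + card (T - C0)" using card_Int_Diff[OF fT] .
  have e2: "card (T \<inter> C0) = card ((T \<inter> C0) \<inter> A0) + card ((T \<inter> C0) - A0)"
    using card_Int_Diff[of "T \<inter> C0" A0] fT by simp
  have e3: "card ((T \<inter> C0) \<inter> A0) \<le> card (A0 \<inter> C0)"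
    using fA by (intro card_mono) auto
  have e4: "card A0 = card (A0 \<inter> C0) + card (A0 - C0)" using card_Int_Diff[OF fA] .
  have e5: "T - A0 = ((T \<inter> C0) - A0) \<union> (T - (A0 \<union> C0))" by blast
  have e6: "card (T - A0) = card ((T \<inter> C0) - A0) + card (T - (A0 \<union> C0))"
    unfolding e5 using fT by (intro card_Un_disjoint) auto
  show ?thesis using e1 e2 e3 e4 e6 cT cA by linarith
qed

theorem mainTheorem15:
  fixes Q :: "'a pos" and A B C :: "'b pos" and n :: nat and vs :: "'a set list"
    and X :: "'a set" and m :: nat
  assumes posA: "is_poset A" and posB: "is_poset B" and posC: "is_poset C"
    and finA: "finite (fst A)" and finB: "finite (fst B)" and finC: "finite (fst C)"
    and cardA: "card (fst A) = n" and cardB: "card (fst B) = n" and cardC: "card (fst C) = n"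
    and nAB: "\<not> pos_iso A B" and nAC: "\<not> pos_iso A C" and nBC: "\<not> pos_iso B C"
    and posQ: "is_poset Q" and finQ: "finite (fst Q)"
    and wit: "witness Q n {A, B, C}"
    and sp: "special_path Q n {A, B, C} vs"
    and minimal: "\<forall>ws. special_path Q n {A, B, C} ws \<longrightarrow> length vs \<le> length ws"
    and v0: "pos_iso (subpos Q (hd vs)) A"
    and vint: "\<forall>i. 0 < i \<and> i < length vs - 1 \<longrightarrow> pos_iso (subpos Q (vs ! i)) B"
    and vr: "pos_iso (subpos Q (last vs)) C"
    and Qunion: "fst Q = \<Union> (set vs)"
    and X_def: "X = hd vs \<inter> last vs"
    and m_def: "m = card (hd vs - X)"
    and m3: "m \<ge> 3"
  shows "\<forall>S. downset Q S \<and> card S = n \<and> \<not> (hd vs - X \<subseteq> S) \<and> \<not> (last vs - X \<subseteq> S)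
           \<longrightarrow> pos_iso (subpos Q S) B"
proof -
  interpret b: base Q n using posQ finQ by unfold_locales
  have types: "pos_iso (subpos Q S) A \<or> pos_iso (subpos Q S) B \<or> pos_iso (subpos Q S) C"
    if "S \<in> exch_vertices Q n" for S
    using wit that unfolding witness_def by blast
  interpret t1: typed Q n A B C
    using nAB nAC nBC types by unfold_locales blast+
  have nCB: "\<not> pos_iso C B" and nCA: "\<not> pos_iso C A" and nBA: "\<not> pos_iso B A"
    using nAB nAC nBC pos_iso_sym by blast+
  interpret t2: typed Q n C B A
    using nCB nCA nBA types by unfold_locales blast+
  define L where "L = length vs"
  define r where "r = L - 1"
  have ep: "exch_path Q n vs" and L3: "3 \<le> L" using sp unfolding special_path_def L_def by blast+
  have ne: "vs \<noteq> []" and sV: "set vs \<subseteq> exch_vertices Q n"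
    and adj: "\<forall>i. Suc i < L \<longrightarrow> exch_adj (vs ! i) (vs ! Suc i)"
    using ep unfolding exch_path_def L_def by blast+
  have vV: "vs ! i \<in> exch_vertices Q n" if "i < L" for i using sV that unfolding L_def by auto
  define A0 where "A0 = hd vs"
  define C0 where "C0 = last vs"
  have A0e: "A0 = vs ! 0" unfolding A0_def using ne by (simp add: hd_conv_nth)
  have C0e: "C0 = vs ! r" unfolding C0_def r_def L_def using ne by (simp add: last_conv_nth)
  have Wr: "r \<le> card (S1 - S2) + card (S2 - S3)"
    if "S1 \<in> exch_vertices Q n" "S2 \<in> exch_vertices Q n" "S3 \<in> exch_vertices Q n"
      "T1 \<in> {A,B,C}" "T2 \<in> {A,B,C}" "T3 \<in> {A,B,C}" "T1 \<noteq> T2" "T2 \<noteq> T3" "T1 \<noteq> T3"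
      "pos_iso (subpos Q S1) T1" "pos_iso (subpos Q S2) T2" "pos_iso (subpos Q S3) T3"
    for S1 S2 S3 T1 T2 T3
  proof -
    have "L \<le> Suc (card (S1 - S2) + card (S2 - S3))"
      using t1.Wlem[of L S1 S2 S3 T1 T2 T3] minimal that unfolding L_def by blast
    then show ?thesis unfolding r_def by simp
  qed
  interpret w1: typedW Q n A B C r
    using Wr by unfold_locales blast
  have Wr2: "r \<le> card (S1 - S2) + card (S2 - S3)"
    if "S1 \<in> exch_vertices Q n" "S2 \<in> exch_vertices Q n" "S3 \<in> exch_vertices Q n"
      "T1 \<in> {C,B,A}" "T2 \<in> {C,B,A}" "T3 \<in> {C,B,A}" "T1 \<noteq> T2" "T2 \<noteq> T3" "T1 \<noteq> T3"
      "pos_iso (subpos Q S1) T1" "pos_iso (subpos Q S2) T2" "pos_iso (subpos Q S3) T3"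
    for S1 S2 S3 T1 T2 T3
  proof -
    have "{C,B,A} = {A,B,C}" by blast
    then show ?thesis using Wr[of S1 S2 S3 T1 T2 T3] that by simp
  qed
  interpret w2: typedW Q n C B A r
    using Wr2 by unfold_locales blast
  have dist: "card (vs ! i - vs ! j) \<le> j - i \<and> card (vs ! j - vs ! i) \<le> j - i"
    if "j < L" "i \<le> j" for i j
    using that
  proof (induction j arbitrary: i)
    case 0 then show ?case by simp
  next
    case (Suc j)
    show ?case
    proof (cases "i = Suc j")
      case True then show ?thesis by simp
    next
      case False
      then have ij: "i \<le> j" using Suc.prems by simp
      have IH: "card (vs ! i - vs ! j) \<le> j - i \<and> card (vs ! j - vs ! i) \<le> j - i"
        using Suc.IH[OF _ ij] Suc.prems by simp
      have a: "exch_adj (vs ! j) (vs ! Suc j)" using adj Suc.prems by blast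
      then have a1: "card (vs ! j - vs ! Suc j) = 1" "card (vs ! Suc j - vs ! j) = 1"
        unfolding exch_adj_def by blast+
      have f: "finite (vs ! i)" "finite (vs ! j)" "finite (vs ! Suc j)"
        using b.VD(4) vV Suc.prems ij by auto
      have "card (vs ! i - vs ! Suc j) \<le> card (vs ! i - vs ! j) + card (vs ! j - vs ! Suc j)"
        using b.tri[OF f(1) f(2)] .
      moreover have "card (vs ! Suc j - vs ! i) \<le> card (vs ! Suc j - vs ! j) + card (vs ! j - vs ! i)"
        using b.tri[OF f(3) f(2)] .
      moreover have "Suc j - i = Suc (j - i)" using ij by simp
      ultimately show ?thesis using IH a1 by (intro conjI; linarith)
    qed
  qed
  have r2: "2 \<le> r" using L3 unfolding r_def by simp
  have AV: "A0 \<in> exch_vertices Q n" unfolding A0e using vV L3 by simp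
  have CV: "C0 \<in> exch_vertices Q n" unfolding C0e r_def using vV L3 by simp
  define v1 where "v1 = vs ! 1"
  define vl where "vl = vs ! (r - 1)"
  have v1V: "v1 \<in> exch_vertices Q n" unfolding v1_def using vV L3 by simp
  have vlV: "vl \<in> exch_vertices Q n" unfolding vl_def r_def using vV L3 by simp
  have tA: "pos_iso (subpos Q A0) A" using v0 unfolding A0_def .
  have tC: "pos_iso (subpos Q C0) C" using vr unfolding C0_def .
  have tB1: "pos_iso (subpos Q v1) B" unfolding v1_def using vint L3 unfolding L_def by simp
  have tBl: "pos_iso (subpos Q vl) B" unfolding vl_def using vint L3 r2 unfolding L_def r_def by simp
  have mA: "m = card (A0 - C0)" unfolding m_def X_def A0_def C0_def by (simp add: Diff_Int)
  have mC: "card (C0 - A0) = m" using b.card_diff_sym[OF AV CV] mA by simp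
  have adj1: "exch_adj A0 v1" unfolding A0e v1_def using adj L3 by simp
  have rr: "Suc (r - 1) = r" "Suc (r - 1) < L" using r2 L3 unfolding r_def by simp_all
  have adjl: "exch_adj vl C0"
  proof -
    have "exch_adj (vs ! (r - 1)) (vs ! Suc (r - 1))" using adj rr(2) by blast
    then show ?thesis unfolding vl_def C0e using rr(1) by simp
  qed
  have adjl': "exch_adj C0 vl" using adjl unfolding exch_adj_def by blast
  have mr: "m \<le> r" using dist[of r 0] A0e C0e mA r2 unfolding r_def by simp
  have rL: "r < L" using L3 unfolding r_def by simp
  have d1: "card (v1 - C0) + 1 \<le> r"
  proof -
    have "card (vs ! 1 - vs ! r) \<le> r - 1" using conjunct1[OF dist[of r 1]] rL r2 by simp
    then show ?thesis unfolding v1_def C0e using r2 by linarith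
  qed
  have dl: "card (vl - A0) + 1 \<le> r"
  proof -
    have "card (vs ! (r - 1) - vs ! 0) \<le> r - 1" using conjunct2[OF dist[of "r - 1" 0]] rL by simp
    then show ?thesis unfolding vl_def A0e using r2 by linarith
  qed
  obtain p1 j1 where rA: "r = card (A0 - C0)" "p1 \<in> A0 - C0" "j1 \<in> C0 - A0" "v1 = insert j1 (A0 - {p1})"
    using w1.rm[OF AV CV v1V tA tB1 tC adj1 d1] mr mA m3 by auto
  obtain pl jl where rC: "jl \<in> C0 - A0" "pl \<in> A0 - C0" "vl = insert pl (C0 - {jl})"
    using w2.rm[OF CV AV vlV tC tBl tA adjl' dl] mr mC m3 rA(1) by auto
  have rm: "r = m" using rA(1) mA by simp
  have QU: "fst Q = A0 \<union> C0"
  proof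
    show "A0 \<union> C0 \<subseteq> fst Q" using Qunion ne unfolding A0_def C0_def by auto
    show "fst Q \<subseteq> A0 \<union> C0"
    proof
      fix x assume "x \<in> fst Q"
      then obtain T where T: "T \<in> set vs" "x \<in> T" using Qunion by auto
      then obtain i where i: "i < L" "T = vs ! i" unfolding L_def by (metis in_set_conv_nth)
      have TV: "T \<in> exch_vertices Q n" using vV i by simp
      have "card (A0 - T) \<le> i" using dist[of i 0] i A0e by simp
      then have c1: "card (T - A0) \<le> i" using b.card_diff_sym[OF AV TV] by simp
      have c2: "card (T - C0) \<le> r - i" using dist[of r i] i C0e unfolding r_def by simp
      have "card (A0 - C0) + card (T - (A0 \<union> C0)) \<le> card (T - A0) + card (T - C0)"
        using b.count[OF TV AV CV] .
      then have "card (T - (A0 \<union> C0)) = 0" using c1 c2 mA rm i unfolding r_def by simp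
      moreover have "finite T" using b.VD(4)[OF TV] .
      ultimately have "T \<subseteq> A0 \<union> C0" by simp
      then show "x \<in> A0 \<union> C0" using T by blast
    qed
  qed
  have QU': "fst Q = C0 \<union> A0" using QU by blast
  have r3: "3 \<le> r" using rm m3 by simp
  have cl: "card (C0 - vl) = 1" using adjl unfolding exch_adj_def by blast
  have c1': "card (A0 - v1) = 1" using adj1 unfolding exch_adj_def by blast
  have hX: "\<forall>S\<in>exch_vertices Q n. A0 \<inter> C0 \<subseteq> S \<and> \<not> A0 - C0 \<subseteq> S \<and> \<not> C0 - A0 \<subseteq> S
             \<longrightarrow> pos_iso (subpos Q S) B"
  proof (intro ballI impI)
    fix S assume SV: "S \<in> exch_vertices Q n" and h: "A0 \<inter> C0 \<subseteq> S \<and> \<not> A0 - C0 \<subseteq> S \<and> \<not> C0 - A0 \<subseteq> S"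
    have nA: "\<not> pos_iso (subpos Q S) A"
      using w1.step1[OF AV CV v1V vlV tA tC tB1 tBl QU rA(1) r3 rA(2) rA(3) rA(4) cl SV] h by blast
    have "C0 \<inter> A0 \<subseteq> S" using h by blast
    then have nC: "\<not> pos_iso (subpos Q S) C"
      using w2.step1[OF CV AV vlV v1V tC tA tBl tB1 QU' _ r3 rC(1) rC(2) rC(3) c1' SV] h rm mC by blast
    show "pos_iso (subpos Q S) B" using types[OF SV] nA nC by blast
  qed
  have hX': "\<forall>S\<in>exch_vertices Q n. C0 \<inter> A0 \<subseteq> S \<and> \<not> C0 - A0 \<subseteq> S \<and> \<not> A0 - C0 \<subseteq> S
             \<longrightarrow> pos_iso (subpos Q S) B"
    using hX by blast
  show ?thesis
  proof (intro allI impI)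
    fix S assume h: "downset Q S \<and> card S = n \<and> \<not> (hd vs - X \<subseteq> S) \<and> \<not> (last vs - X \<subseteq> S)"
    have SV: "S \<in> exch_vertices Q n" using h unfolding exch_vertices_def by blast
    have hP: "\<not> A0 - C0 \<subseteq> S" using h unfolding X_def A0_def C0_def by (simp add: Diff_Int)
    have hR: "\<not> C0 - A0 \<subseteq> S" using h unfolding X_def A0_def C0_def by (simp add: Diff_Int Int_commute)
    have nA: "\<not> pos_iso (subpos Q S) A"
      using w1.step2[OF AV CV tA tC QU _ hX SV hP hR] mr mA by simp
    have nC: "\<not> pos_iso (subpos Q S) C"
      using w2.step2[OF CV AV tC tA QU' _ hX' SV hR hP] mr mC by simp
    show "pos_iso (subpos Q S) B" using types[OF SV] nA nC by blast
  qed
qed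


end
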